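(* Let $k\le l$ be positive integers with $\gcd(k,l)=1$, let $n\ge1$, $m\ge 0$ be integers, write $m=qn+r$ with integers $q\ge 0$, $0\le r<n$, and let $A\in\mathcal D^{k,l}(m,n)$. Let $W$ be a submatrix of $A$ (on a set of rows $I$ and set of columns $J$) all of whose entries are at most $q$, with $|I|+|J|$ as large as possible among all such submatrices. After permuting rows and columns write $$A=\begin{pmatrix}X&Y\\ Z&W\end{pmatrix},$$ where $X$ has size $t_1\times t_2$ (so $t_1=nk-|I|$, $t_2=nl-|J|$), $Y$ has size $t_1\times |J|$ and $Z$ has size $|I|\times t_2$. If $t_1+t_2\le nk$, then $${\rm tdet}(A)\ge \min\bigl(nk(q+1),\ {\rm tdet}(Y)+{\rm tdet}(Z)+(nk-t_1-t_2)q\bigr).$$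
   Context: $\mathcal D^{k,l}(m,n)$ denotes the set of all $nk\times nl$ matrices with nonnegative integer entries all of whose row sums equal $ml$ and all of whose column sums equal $mk$. For an $s\times t$ matrix $A=(a_{ij})$ with $s\le t$, a transversal of $A$ is a set of entries $T=\{a_{1i_1},\dots,a_{si_s}\}$ with $i_1,\dots,i_s\in\{1,\dots,t\}$ pairwise distinct, and $|T|=a_{1i_1}+\cdots+a_{si_s}$; if $s>t$, the transversals of $A$ are those of its transpose. The tropical determinant is ${\rm tdet}(A)=\max_T|T|$ over all transversals $T$ of $A$; a matrix with no rows or no columns has tropical determinant $0$. The tropical determinant is invariant under row and column permutations. *)

theory Defs
  imports Main
begin

text \<open>Matrices are functions nat => nat => nat; a (sub)matrix is given by a
finite set of row indices R and column indices C.\<close>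

definition inD :: "nat \<Rightarrow> nat \<Rightarrow> nat \<Rightarrow> nat \<Rightarrow> (nat \<Rightarrow> nat \<Rightarrow> nat) \<Rightarrow> bool" where
  "inD k l m n A \<longleftrightarrow>
     (\<forall>i < n*k. (\<Sum>j<n*l. A i j) = m*l) \<and> (\<forall>j < n*l. (\<Sum>i<n*k. A i j) = m*k)"

definition tdet :: "(nat \<Rightarrow> nat \<Rightarrow> nat) \<Rightarrow> nat set \<Rightarrow> nat set \<Rightarrow> nat" where
  "tdet A R C =
     (if card R \<le> card C
      then Max {\<Sum>i\<in>R. A i (f i) | f. f ` R \<subseteq> C \<and> inj_on f R}
      else Max {\<Sum>j\<in>C. A (g j) j | g. g ` C \<subseteq> R \<and> inj_on g C})"

end

theory Submission imports Defs begin

lemma step: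
  fixes E :: "nat \<Rightarrow> nat \<Rightarrow> int"
  assumes NM: "N \<le> M" and rows: "\<forall>i<N. 0 \<le> (\<Sum>j<M. E i j)"
    and cols: "\<forall>j<M. 0 \<le> (\<Sum>i<N. E i j)"
    and R: "R \<subseteq> {..<N}" "card R < N" "f ` R \<subseteq> {..<M}" "inj_on f R"
  shows "\<exists>R' f'. R' \<subseteq> {..<N} \<and> card R' = Suc (card R) \<and> f' ` R' \<subseteq> {..<M} \<and> inj_on f' R'
          \<and> min (int N) (\<Sum>i\<in>R. E i (f i)) \<le> (\<Sum>i\<in>R'. E i (f' i))"
proof -
  define s where "s = (\<Sum>i\<in>R. E i (f i))"
  define k where "k = card R"
  have finR: "finite R" using R(1) finite_subset by blast
  define C1 where "C1 = f ` R"
  define C0 where "C0 = {..<M} - C1"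
  define R0 where "R0 = {..<N} - R"
  have cC1: "card C1 = k" unfolding C1_def k_def using R(4) card_image by blast
  have cC0: "card C0 = M - k" unfolding C0_def using cC1 R(3) C1_def
    by (simp add: card_Diff_subset finR)
  have cR0: "card R0 = N - k" unfolding R0_def k_def using R(1) by (simp add: card_Diff_subset finR)
  have "k < N" using R(2) k_def by simp
  hence "R0 \<noteq> {}" "C0 \<noteq> {}" using cR0 cC0 NM by auto
  then obtain i0 j0 where i0: "i0 \<in> R0" and j0: "j0 \<in> C0" by blast
  show ?thesis
  proof (cases "\<exists>i\<in>R0. \<exists>j\<in>C0. 0 \<le> E i j")
    case True
    then obtain i j where ij: "i \<in> R0" "j \<in> C0" "0 \<le> E i j" by blast
    have iR: "i \<notin> R" using ij R0_def by auto
    have jR: "j \<notin> f ` R" using ij C0_def C1_def by auto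
    have "(\<Sum>r\<in>insert i R. E r ((f(i:=j)) r)) = E i j + (\<Sum>r\<in>R. E r ((f(i:=j)) r))"
      using finR iR by simp
    also have "(\<Sum>r\<in>R. E r ((f(i:=j)) r)) = s" unfolding s_def
      using iR by (intro sum.cong) auto
    finally have v: "(\<Sum>r\<in>insert i R. E r ((f(i:=j)) r)) = E i j + s" .
    show ?thesis
    proof (intro exI conjI)
      show "insert i R \<subseteq> {..<N}" using R(1) ij R0_def by auto
      show "card (insert i R) = Suc (card R)" using finR iR by simp
      show "(f(i:=j)) ` insert i R \<subseteq> {..<M}" using R(3) ij C0_def iR by auto
      show "inj_on (f(i:=j)) (insert i R)"
        using R(4) jR iR by (auto simp: inj_on_def)
      show "min (int N) (\<Sum>i\<in>R. E i (f i)) \<le> (\<Sum>r\<in>insert i R. E r ((f(i:=j)) r))"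
        using v ij s_def by linarith
    qed
  next
    case False
    hence neg: "\<forall>i\<in>R0. \<forall>j\<in>C0. E i j \<le> -1" by force
    have i0R: "i0 \<notin> R" "i0 < N" using i0 R0_def by auto
    have j0R: "j0 \<notin> f ` R" "j0 < M" using j0 C0_def C1_def by auto
    have "(\<Sum>j<M. E i0 j) = (\<Sum>j\<in>C1. E i0 j) + (\<Sum>j\<in>C0. E i0 j)"
      unfolding C0_def using sum.subset_diff[of C1 "{..<M}" "E i0"] R(3) C1_def by simp
    moreover have "(\<Sum>j\<in>C0. E i0 j) \<le> (\<Sum>j\<in>C0. -1)"
      using neg i0 by (intro sum_mono) auto
    moreover have "(\<Sum>j<M. E i0 j) \<ge> 0" using rows i0R by auto
    ultimately have r1: "(\<Sum>j\<in>C1. E i0 j) \<ge> int (M - k)" using cC0 by simp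
    have "(\<Sum>j\<in>C1. E i0 j) = (\<Sum>p\<in>R. E i0 (f p))"
      unfolding C1_def using R(4) by (simp add: sum.reindex)
    with r1 have r2: "(\<Sum>p\<in>R. E i0 (f p)) \<ge> int (M - k)" by simp
    have "(\<Sum>i<N. E i j0) = (\<Sum>i\<in>R. E i j0) + (\<Sum>i\<in>R0. E i j0)"
      unfolding R0_def using sum.subset_diff[of R "{..<N}" "\<lambda>i. E i j0"] R(1) by simp
    moreover have "(\<Sum>i\<in>R0. E i j0) \<le> (\<Sum>i\<in>R0. -1)"
      using neg j0 by (intro sum_mono) auto
    moreover have "(\<Sum>i<N. E i j0) \<ge> 0" using cols j0R by auto
    ultimately have c2: "(\<Sum>p\<in>R. E p j0) \<ge> int (N - k)" using cR0 by simp
    define g where "g p = E i0 (f p) + E p j0 - E p (f p)" for p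
    have sumg: "(\<Sum>p\<in>R. g p) = (\<Sum>p\<in>R. E i0 (f p)) + (\<Sum>p\<in>R. E p j0) - s"
      unfolding g_def s_def by (simp add: sum.distrib sum_subtractf)
    have "\<exists>p\<in>R. min (int N) s \<le> s + g p"
    proof (rule ccontr)
      assume "\<not> ?thesis"
      hence lt: "\<forall>p\<in>R. s + g p \<le> min (int N) s - 1" by force
      have "(\<Sum>p\<in>R. g p) \<le> (\<Sum>p\<in>R. min (int N) s - 1 - s)"
        using lt by (intro sum_mono) force
      hence A: "int (N - k) + int (M - k) - s \<le> int k * (min (int N) s - 1 - s)"
        using sumg r2 c2 k_def by simp
      have kN: "k < N" "k \<le> M" using \<open>k < N\<close> NM by auto
      show False
      proof (cases "s \<le> int N")
        case True
        hence "min (int N) s = s" by simp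
        with A have "int (N - k) + int (M - k) - s \<le> - int k" by simp
        with True kN NM show False by (simp add: of_nat_diff)
      next
        case False
        hence "min (int N) s = int N" by simp
        with A have B: "int N + int M - 2 * int k - s \<le> int k * (int N - 1 - s)"
          using kN by (simp add: of_nat_diff)
        have "k \<noteq> 0"
        proof
          assume "k = 0" hence "R = {}" using k_def finR by simp
          hence "s = 0" using s_def by simp
          with False show False by simp
        qed
        have "(int k - 1) * (int N + 1) \<le> (int k - 1) * s"
          using False \<open>k \<noteq> 0\<close> by (intro mult_left_mono) auto
        with B kN NM \<open>k \<noteq> 0\<close> show False by (simp add: algebra_simps)
      qed
    qed
    then obtain p where p: "p \<in> R" "min (int N) s \<le> s + g p" by blast
    define f' where "f' = f(i0 := f p, p := j0)"
    have pi0: "p \<noteq> i0" using p i0R by auto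
    have "(\<Sum>r\<in>insert i0 R. E r (f' r)) = E i0 (f' i0) + (\<Sum>r\<in>R. E r (f' r))"
      using finR i0R by simp
    also have "(\<Sum>r\<in>R. E r (f' r)) = E p (f' p) + (\<Sum>r\<in>R - {p}. E r (f' r))"
      using finR p by (simp add: sum.remove)
    also have "(\<Sum>r\<in>R - {p}. E r (f' r)) = (\<Sum>r\<in>R - {p}. E r (f r))"
      unfolding f'_def using i0R by (intro sum.cong) auto
    also have "(\<Sum>r\<in>R - {p}. E r (f r)) = s - E p (f p)"
      unfolding s_def using finR p by (simp add: sum.remove)
    finally have v: "(\<Sum>r\<in>insert i0 R. E r (f' r)) = s + g p"
      unfolding g_def f'_def using pi0 by simp
    show ?thesis
    proof (intro exI conjI)
      show "insert i0 R \<subseteq> {..<N}" using R(1) i0R by auto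
      show "card (insert i0 R) = Suc (card R)" using finR i0R by simp
      show "f' ` insert i0 R \<subseteq> {..<M}" using R(3) j0R p pi0 unfolding f'_def by auto
      show "inj_on f' (insert i0 R)"
        using R(4) j0R p pi0 i0R unfolding f'_def inj_on_def by auto
      show "min (int N) (\<Sum>i\<in>R. E i (f i)) \<le> (\<Sum>r\<in>insert i0 R. E r (f' r))"
        using v p s_def by simp
    qed
  qed
qed

lemma extend:
  fixes E :: "nat \<Rightarrow> nat \<Rightarrow> int"
  assumes NM: "N \<le> M" and rows: "\<forall>i<N. 0 \<le> (\<Sum>j<M. E i j)"
    and cols: "\<forall>j<M. 0 \<le> (\<Sum>i<N. E i j)"
  shows "R \<subseteq> {..<N} \<Longrightarrow> f ` R \<subseteq> {..<M} \<Longrightarrow> inj_on f R \<Longrightarrow>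
     \<exists>g. g ` {..<N} \<subseteq> {..<M} \<and> inj_on g {..<N} \<and>
         min (int N) (\<Sum>i\<in>R. E i (f i)) \<le> (\<Sum>i<N. E i (g i))"
proof (induction "N - card R" arbitrary: R f rule: less_induct)
  case less
  have finR: "finite R" using less.prems(1) finite_subset by blast
  have cle: "card R \<le> N" using less.prems(1) by (metis card_lessThan card_mono finite_lessThan)
  show ?case
  proof (cases "card R = N")
    case True
    hence "R = {..<N}" using less.prems(1) by (simp add: card_subset_eq)
    thus ?thesis using less.prems by (intro exI[of _ f]) auto
  next
    case False
    hence "card R < N" using cle by simp
    from step[OF NM rows cols less.prems(1) this less.prems(2,3)]
    obtain R' f' where R': "R' \<subseteq> {..<N}" "card R' = Suc (card R)" "f' ` R' \<subseteq> {..<M}" "inj_on f' R'"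
      "min (int N) (\<Sum>i\<in>R. E i (f i)) \<le> (\<Sum>i\<in>R'. E i (f' i))" by blast
    have "N - card R' < N - card R" using R'(2) \<open>card R < N\<close> by simp
    from less.hyps[OF this R'(1,3,4)] obtain g where g: "g ` {..<N} \<subseteq> {..<M}" "inj_on g {..<N}"
      "min (int N) (\<Sum>i\<in>R'. E i (f' i)) \<le> (\<Sum>i<N. E i (g i))" by blast
    thus ?thesis using R'(5) by (intro exI[of _ g]) auto
  qed
qed

lemma tdet_match:
  assumes "finite R" "finite C"
  shows "\<exists>R0 f. R0 \<subseteq> R \<and> f ` R0 \<subseteq> C \<and> inj_on f R0 \<and> card R0 = min (card R) (card C)
             \<and> (\<Sum>i\<in>R0. A i (f i)) = tdet A R C"
proof (cases "card R \<le> card C")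
  case True
  define S where "S = {\<Sum>i\<in>R. A i (f i) | f. f ` R \<subseteq> C \<and> inj_on f R}"
  have "S \<subseteq> {..(\<Sum>i\<in>R. \<Sum>j\<in>C. A i j)}"
  proof
    fix x assume "x \<in> S"
    then obtain f where f: "x = (\<Sum>i\<in>R. A i (f i))" "f ` R \<subseteq> C" by (auto simp: S_def)
    have "(\<Sum>i\<in>R. A i (f i)) \<le> (\<Sum>i\<in>R. \<Sum>j\<in>C. A i j)"
      using f(2) assms by (intro sum_mono member_le_sum) auto
    thus "x \<in> {..(\<Sum>i\<in>R. \<Sum>j\<in>C. A i j)}" using f by simp
  qed
  hence finS: "finite S" using finite_subset by blast
  obtain f0 where "f0 ` R \<subseteq> C" "inj_on f0 R" using card_le_inj[OF assms True] by blast
  hence "S \<noteq> {}" by (auto simp: S_def)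
  hence "Max S \<in> S" using finS by simp
  then obtain f where f: "Max S = (\<Sum>i\<in>R. A i (f i))" "f ` R \<subseteq> C" "inj_on f R" by (auto simp: S_def)
  have "tdet A R C = Max S" unfolding tdet_def S_def using True by simp
  thus ?thesis using f True by (intro exI[of _ R] exI[of _ f]) auto
next
  case False
  define S where "S = {\<Sum>j\<in>C. A (g j) j | g. g ` C \<subseteq> R \<and> inj_on g C}"
  have "S \<subseteq> {..(\<Sum>j\<in>C. \<Sum>i\<in>R. A i j)}"
  proof
    fix x assume "x \<in> S"
    then obtain g where g: "x = (\<Sum>j\<in>C. A (g j) j)" "g ` C \<subseteq> R" by (auto simp: S_def)
    have "(\<Sum>j\<in>C. A (g j) j) \<le> (\<Sum>j\<in>C. \<Sum>i\<in>R. A i j)"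
      using g(2) assms by (intro sum_mono member_le_sum[where f="\<lambda>i. A i _"]) auto
    thus "x \<in> {..(\<Sum>j\<in>C. \<Sum>i\<in>R. A i j)}" using g by simp
  qed
  hence finS: "finite S" using finite_subset by blast
  obtain g0 where "g0 ` C \<subseteq> R" "inj_on g0 C" using card_le_inj[OF assms(2,1)] False by auto
  hence "S \<noteq> {}" by (auto simp: S_def)
  hence "Max S \<in> S" using finS by simp
  then obtain g where g: "Max S = (\<Sum>j\<in>C. A (g j) j)" "g ` C \<subseteq> R" "inj_on g C" by (auto simp: S_def)
  have "tdet A R C = Max S" unfolding tdet_def S_def using False by simp
  have "(\<Sum>i\<in>g ` C. A i (inv_into C g i)) = (\<Sum>j\<in>C. A (g j) (inv_into C g (g j)))"
    using g(3) by (simp add: sum.reindex)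
  also have "\<dots> = (\<Sum>j\<in>C. A (g j) j)" using g(3) by (intro sum.cong) auto
  finally have v: "(\<Sum>i\<in>g ` C. A i (inv_into C g i)) = tdet A R C"
    using g(1) \<open>tdet A R C = Max S\<close> by simp
  show ?thesis
  proof (intro exI conjI)
    show "g ` C \<subseteq> R" by fact
    show "inv_into C g ` g ` C \<subseteq> C" using g(3) by auto
    show "inj_on (inv_into C g) (g ` C)" using inj_on_inv_into by blast
    show "card (g ` C) = min (card R) (card C)" using g(3) False by (simp add: card_image)
    show "(\<Sum>i\<in>g ` C. A i (inv_into C g i)) = tdet A R C" by fact
  qed
qed

lemma tdet_ge:
  assumes "finite R" "finite C" "card R \<le> card C" "f ` R \<subseteq> C" "inj_on f R"
  shows "(\<Sum>i\<in>R. A i (f i)) \<le> tdet A R C"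
proof -
  define S where "S = {\<Sum>i\<in>R. A i (f i) | f. f ` R \<subseteq> C \<and> inj_on f R}"
  have "S \<subseteq> {..(\<Sum>i\<in>R. \<Sum>j\<in>C. A i j)}"
  proof
    fix x assume "x \<in> S"
    then obtain f where f: "x = (\<Sum>i\<in>R. A i (f i))" "f ` R \<subseteq> C" by (auto simp: S_def)
    have "(\<Sum>i\<in>R. A i (f i)) \<le> (\<Sum>i\<in>R. \<Sum>j\<in>C. A i j)"
      using f(2) assms by (intro sum_mono member_le_sum) auto
    thus "x \<in> {..(\<Sum>i\<in>R. \<Sum>j\<in>C. A i j)}" using f by simp
  qed
  hence finS: "finite S" using finite_subset by blast
  have "(\<Sum>i\<in>R. A i (f i)) \<in> S" using assms by (auto simp: S_def)
  hence "(\<Sum>i\<in>R. A i (f i)) \<le> Max S" using finS by simp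
  thus ?thesis unfolding tdet_def S_def using assms(3) by simp
qed

theorem lemma2p5:
  fixes k l n m q :: nat and A :: "nat \<Rightarrow> nat \<Rightarrow> nat" and I J :: "nat set"
  assumes "0 < k" "k \<le> l" "gcd k l = 1" "1 \<le> n"
    and "q = m div n"
    and "inD k l m n A"
    and "I \<subseteq> {..<n*k}" "J \<subseteq> {..<n*l}"
    and "\<forall>i\<in>I. \<forall>j\<in>J. A i j \<le> q"
    and "\<forall>I' J'. I' \<subseteq> {..<n*k} \<and> J' \<subseteq> {..<n*l} \<and> (\<forall>i\<in>I'. \<forall>j\<in>J'. A i j \<le> q)
               \<longrightarrow> card I' + card J' \<le> card I + card J"
    and "(n*k - card I) + (n*l - card J) \<le> n*k"
  shows "tdet A {..<n*k} {..<n*l} \<ge>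
           min (n*k*(q+1))
               (tdet A ({..<n*k} - I) J + tdet A I ({..<n*l} - J)
                + (n*k - (n*k - card I) - (n*l - card J)) * q)"
proof -
  define N where "N = n*k"
  define M where "M = n*l"
  define t1 where "t1 = N - card I"
  define t2 where "t2 = M - card J"
  define tY where "tY = tdet A ({..<N} - I) J"
  define tZ where "tZ = tdet A I ({..<M} - J)"
  define T where "T = tdet A {..<N} {..<M}"
  have NM: "N \<le> M" unfolding N_def M_def using assms(2) by simp
  have IN: "I \<subseteq> {..<N}" and JM: "J \<subseteq> {..<M}" using assms(7,8) N_def M_def by auto
  have finI: "finite I" and finJ: "finite J" using IN JM finite_subset by auto
  have cI: "card I \<le> N" using IN by (metis card_lessThan card_mono finite_lessThan)
  have cJ: "card J \<le> M" using JM by (metis card_lessThan card_mono finite_lessThan)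
  have ct: "t1 + t2 \<le> N" using assms(11) t1_def t2_def N_def M_def by simp
  have cIc: "card ({..<N} - I) = t1" using IN finI t1_def by (simp add: card_Diff_subset)
  have cJc: "card ({..<M} - J) = t2" using JM finJ t2_def by (simp add: card_Diff_subset)
  have t1J: "t1 \<le> card J" using ct NM cJ t2_def by linarith
  have t2I: "t2 \<le> card I" using ct cI t1_def by linarith
  obtain R1 f1 where R1: "R1 \<subseteq> {..<N} - I" "f1 ` R1 \<subseteq> J" "inj_on f1 R1"
      "card R1 = t1" "(\<Sum>i\<in>R1. A i (f1 i)) = tY"
    using tdet_match[of "{..<N} - I" J A] finJ cIc t1J unfolding tY_def by auto
  obtain R2 f2 where R2: "R2 \<subseteq> I" "f2 ` R2 \<subseteq> {..<M} - J" "inj_on f2 R2"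
      "card R2 = t2" "(\<Sum>i\<in>R2. A i (f2 i)) = tZ"
    using tdet_match[of I "{..<M} - J" A] finI cJc t2I unfolding tZ_def by auto
  define R where "R = R1 \<union> R2"
  define f where "f i = (if i \<in> R1 then f1 i else f2 i)" for i
  have disj: "R1 \<inter> R2 = {}" using R1(1) R2(1) by auto
  have finR1: "finite R1" using R1(1) finite_subset by (metis finite_Diff finite_lessThan)
  have finR2: "finite R2" using R2(1) finI finite_subset by auto
  have RN: "R \<subseteq> {..<N}" using R1(1) R2(1) IN R_def by auto
  have fR: "f ` R \<subseteq> {..<M}" using R1(2) R2(2) JM unfolding R_def f_def by auto
  have injf: "inj_on f R"
  proof (rule inj_onI)
    fix x y assume xy: "x \<in> R" "y \<in> R" "f x = f y"
    show "x = y"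
    proof (cases "x \<in> R1"; cases "y \<in> R1")
      assume "x \<in> R1" "y \<in> R1" thus ?thesis using xy R1(3) f_def by (auto dest: inj_onD)
    next
      assume a: "x \<in> R1" "y \<notin> R1"
      hence "f x \<in> J" "f y \<notin> J" using xy R1(2) R2(2) R_def f_def by auto
      thus ?thesis using xy by simp
    next
      assume a: "x \<notin> R1" "y \<in> R1"
      hence "f y \<in> J" "f x \<notin> J" using xy R1(2) R2(2) R_def f_def by auto
      thus ?thesis using xy by simp
    next
      assume "x \<notin> R1" "y \<notin> R1" thus ?thesis using xy R2(3) f_def R_def by (auto dest: inj_onD)
    qed
  qed
  have sumR: "(\<Sum>i\<in>R. A i (f i)) = tY + tZ"
  proof -
    have "(\<Sum>i\<in>R. A i (f i)) = (\<Sum>i\<in>R1. A i (f i)) + (\<Sum>i\<in>R2. A i (f i))"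
      unfolding R_def using disj finR1 finR2 by (simp add: sum.union_disjoint)
    also have "(\<Sum>i\<in>R1. A i (f i)) = tY" using R1(5) f_def by (metis (no_types, lifting) sum.cong)
    also have "(\<Sum>i\<in>R2. A i (f i)) = tZ" using R2(5) f_def disj
      by (metis (no_types, lifting) disjoint_iff sum.cong)
    finally show ?thesis .
  qed
  have cR: "card R = t1 + t2" unfolding R_def using disj finR1 finR2 R1(4) R2(4)
    by (simp add: card_Un_disjoint)
  define E where "E i j = int (A i j) - int q" for i j
  have nq: "n * q \<le> m" using assms(5) by (metis le_add1 mult_div_mod_eq)
  have rowA: "\<forall>i<N. (\<Sum>j<M. A i j) = m*l" and colA: "\<forall>j<M. (\<Sum>i<N. A i j) = m*k"
    using assms(6) unfolding inD_def N_def M_def by auto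
  have rows: "\<forall>i<N. 0 \<le> (\<Sum>j<M. E i j)"
  proof (intro allI impI)
    fix i assume "i < N"
    have "(\<Sum>j<M. E i j) = int (\<Sum>j<M. A i j) - int M * int q"
      unfolding E_def by (simp add: sum_subtractf)
    also have "\<dots> = int (m*l) - int (n*q*l)" using rowA \<open>i<N\<close> M_def by (simp add: algebra_simps)
    also have "\<dots> \<ge> 0" using mult_le_mono1[OF nq, of l] by linarith
    finally show "0 \<le> (\<Sum>j<M. E i j)" .
  qed
  have cols: "\<forall>j<M. 0 \<le> (\<Sum>i<N. E i j)"
  proof (intro allI impI)
    fix j assume "j < M"
    have "(\<Sum>i<N. E i j) = int (\<Sum>i<N. A i j) - int N * int q"
      unfolding E_def by (simp add: sum_subtractf)
    also have "\<dots> = int (m*k) - int (n*q*k)" using colA \<open>j<M\<close> N_def by (simp add: algebra_simps)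
    also have "\<dots> \<ge> 0" using mult_le_mono1[OF nq, of k] by linarith
    finally show "0 \<le> (\<Sum>i<N. E i j)" .
  qed
  obtain g where g: "g ` {..<N} \<subseteq> {..<M}" "inj_on g {..<N}"
    "min (int N) (\<Sum>i\<in>R. E i (f i)) \<le> (\<Sum>i<N. E i (g i))"
    using extend[OF NM rows cols RN fR injf] by blast
  have sE: "(\<Sum>i\<in>R. E i (f i)) = int (tY + tZ) - int (t1 + t2) * int q"
    unfolding E_def using sumR cR by (simp add: sum_subtractf flip: of_nat_sum)
  have gE: "(\<Sum>i<N. E i (g i)) = int (\<Sum>i<N. A i (g i)) - int N * int q"
    unfolding E_def by (simp add: sum_subtractf flip: of_nat_sum)
  have "(\<Sum>i<N. A i (g i)) \<le> T" unfolding T_def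
    using tdet_ge[of "{..<N}" "{..<M}" g A] g NM by simp
  hence key: "min (int N) (int (tY + tZ) - int (t1 + t2) * int q) + int N * int q \<le> int T"
    using g(3) sE gE by linarith
  have "int (min (N*(q+1)) (tY + tZ + (N - t1 - t2) * q)) \<le> int T"
  proof -
    have "int (min (N*(q+1)) (tY + tZ + (N - t1 - t2) * q))
        = min (int N * int q + int N) (int tY + int tZ + (int N - int t1 - int t2) * int q)"
    proof -
      have d: "int (N - t1 - t2) = int N - int t1 - int t2" using ct by linarith
      have "int (min (N*(q+1)) (tY + tZ + (N - t1 - t2) * q))
          = min (int (N*(q+1))) (int (tY + tZ + (N - t1 - t2) * q))" by linarith
      also have "int (N*(q+1)) = int N * int q + int N" by (simp add: algebra_simps)
      also have "int (tY + tZ + (N - t1 - t2) * q) = int tY + int tZ + int (N - t1 - t2) * int q" by simp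
      finally show ?thesis using d by (simp add: algebra_simps)
    qed
    also have "\<dots> = min (int N) (int (tY + tZ) - int (t1 + t2) * int q) + int N * int q"
      by (simp add: algebra_simps min_add_distrib_left)
    finally show ?thesis using key by simp
  qed
  hence "min (N*(q+1)) (tY + tZ + (N - t1 - t2) * q) \<le> T" by linarith
  thus ?thesis unfolding T_def tY_def tZ_def t1_def t2_def N_def M_def by simp
qed

end
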